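(* Let $(X,d,\mu)$ be a doubling metric measure space such that $(X,d)$ is connected and $L$-annularly connected for some $L\ge1$. Then $(X,d)$ satisfies a chain condition.
   Context: $\mu$ is doubling if every ball has positive finite measure and $\mu(B(x,2r))\le C_\mu\mu(B(x,r))$ for all $x\in X$, $r>0$. For $0<r<R$, $A(x,r,R)=\overline{B}(x,R)\setminus B(x,r)$. $X$ is $L$-annularly connected if whenever $y,z\in A(x,r,2r)$ for some $x\in X$, $r>0$, there is a curve joining $y$ and $z$ in $A(x,r/L,2rL)$. Chain condition: for every $\lambda\ge1$ there are constants $M\ge1$, $0<m\le1$ such that for each $x\in X$ and all $0<r<\operatorname{diam}(X)/8$ there is a sequence of balls $B_0,B_1,\dots$ with (1) $B_0\subset X\setminus B(x,r)$; (2) $M^{-1}\operatorname{diam}(B_i)\le\operatorname{dist}(x,B_i)\le M\operatorname{diam}(B_i)$; (3) $\operatorname{dist}(x,B_i)\le Mr2^{-mi}$; (4) there is a ball $D_i\subset B_i\cap B_{i+1}$ with $B_i\cup B_{i+1}\subset MD_i$, for all $i\ge0$; (5) no point of $X$ belongs to more than $M$ of the balls $\lambda B_i$ (where $\lambda B(y,s)=B(y,\lambda s)$). *)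

theory Defs
  imports "HOL-Analysis.Analysis"
begin

text \<open>The metric space X is the whole type 'a. Balls B(x,r) are open balls, r > 0.\<close>

definition doubling_measure :: "'a::metric_space measure \<Rightarrow> bool" where
  "doubling_measure \<mu> \<longleftrightarrow>
     sets \<mu> = sets borel \<and>
     (\<forall>x r. 0 < r \<longrightarrow> 0 < emeasure \<mu> (ball x r) \<and> emeasure \<mu> (ball x r) < \<infinity>) \<and>
     (\<exists>C::real. \<forall>x r. 0 < r \<longrightarrow>
        emeasure \<mu> (ball x (2 * r)) \<le> ennreal C * emeasure \<mu> (ball x r))"

definition annulus :: "'a::metric_space \<Rightarrow> real \<Rightarrow> real \<Rightarrow> 'a set" where
  "annulus x r R = cball x R - ball x r"

definition annularly_connected :: "real \<Rightarrow> 'a::metric_space itself \<Rightarrow> bool" where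
  "annularly_connected L (_::'a itself) \<longleftrightarrow>
     (\<forall>(x::'a) r y z. 0 < r \<longrightarrow> y \<in> annulus x r (2 * r) \<longrightarrow> z \<in> annulus x r (2 * r) \<longrightarrow>
        (\<exists>g. path g \<and> pathstart g = y \<and> pathfinish g = z \<and>
             path_image g \<subseteq> annulus x (r / L) (2 * r * L)))"

text \<open>Admissible radii: 0 < r < diam(X)/8, where diam(X) = \<infinity> if X is unbounded.\<close>
definition admissible_radius :: "'a::metric_space itself \<Rightarrow> real \<Rightarrow> bool" where
  "admissible_radius (_::'a itself) r \<longleftrightarrow>
     0 < r \<and> (bounded (UNIV::'a set) \<longrightarrow> r < diameter (UNIV::'a set) / 8)"

definition chain_condition :: "'a::metric_space itself \<Rightarrow> bool" where
  "chain_condition (T::'a itself) \<longleftrightarrow>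
     (\<forall>lam::real. 1 \<le> lam \<longrightarrow>
       (\<exists>M::real. \<exists>m::real. 1 \<le> M \<and> 0 < m \<and> m \<le> 1 \<and>
         (\<forall>(x::'a) r. admissible_radius T r \<longrightarrow>
           (\<exists>(c::nat \<Rightarrow> 'a) (s::nat \<Rightarrow> real).
              (\<forall>i. 0 < s i) \<and>
              ball (c 0) (s 0) \<subseteq> UNIV - ball x r \<and>
              (\<forall>i. diameter (ball (c i) (s i)) / M \<le> infdist x (ball (c i) (s i)) \<and>
                   infdist x (ball (c i) (s i)) \<le> M * diameter (ball (c i) (s i))) \<and>
              (\<forall>i. infdist x (ball (c i) (s i)) \<le> M * r * 2 powr (- m * real i)) \<and>
              (\<forall>i. \<exists>d t. 0 < t \<and>
                   ball d t \<subseteq> ball (c i) (s i) \<inter> ball (c (Suc i)) (s (Suc i)) \<and>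
                   ball (c i) (s i) \<union> ball (c (Suc i)) (s (Suc i)) \<subseteq> ball d (M * t)) \<and>
              (\<forall>p. finite {i. p \<in> ball (c i) (lam * s i)} \<and>
                   real (card {i. p \<in> ball (c i) (lam * s i)}) \<le> M)))))"

end

theory Submission
  imports Defs
begin

lemma ivt_dist:
  fixes p q :: "'a::metric_space"
  assumes "connected (UNIV::'a set)" "0 \<le> t" "t \<le> dist p q"
  shows "\<exists>z. dist p z = t"
proof -
  have "connected (range (dist p))"
    by (rule connected_continuous_image[OF _ assms(1)]) (intro continuous_intros)
  then have "t \<in> range (dist p)"
    unfolding connected_iff_interval using assms(2,3)
    by (metis UNIV_I dist_self image_eqI)
  then show ?thesis by auto
qed

lemma diameter_ball_le:
  fixes c :: "'a::metric_space"
  assumes "0 < s"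
  shows "diameter (ball c s) \<le> 2 * s"
proof -
  have ne: "ball c s \<noteq> {}" using assms by auto
  have "(SUP (x,y)\<in>ball c s \<times> ball c s. dist x y) \<le> 2 * s"
  proof (rule cSUP_least)
    show "ball c s \<times> ball c s \<noteq> {}" using ne by auto
    fix xy assume "xy \<in> ball c s \<times> ball c s"
    then show "(case xy of (x, y) \<Rightarrow> dist x y) \<le> 2 * s"
    proof (cases xy)
      case (Pair a b)
      then have "dist a c < s" "dist c b < s" using \<open>xy \<in> _\<close> by (auto simp: dist_commute)
      then show ?thesis using Pair dist_triangle[of a b c] by simp
    qed
  qed
  then show ?thesis using ne by (simp add: diameter_def)
qed

lemma infdist_ball_ge:
  fixes c x :: "'a::metric_space"
  assumes "0 < s"
  shows "dist x c - s \<le> infdist x (ball c s)"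
proof -
  have ne: "ball c s \<noteq> {}" using assms by auto
  have "dist x c - s \<le> (INF a\<in>ball c s. dist x a)"
    apply (rule cINF_greatest[OF ne])
    by (smt (verit) dist_commute dist_triangle mem_ball)
  then show ?thesis using ne by (simp add: infdist_def)
qed

lemma diameter_ball_ge:
  fixes c :: "'a::metric_space"
  assumes "connected (UNIV::'a set)" "0 < s" "s \<le> dist c x"
  shows "s / 2 \<le> diameter (ball c s)"
proof -
  obtain z where z: "dist c z = s/2" using ivt_dist[OF assms(1), of "s/2" c x] assms by auto
  have "dist c z \<le> diameter (ball c s)"
    by (rule diameter_bounded_bound) (use z assms(2) in auto)
  then show ?thesis using z by simp
qed


lemma doubling_iter:
  fixes \<mu> :: "'a::metric_space measure"
  assumes sb: "sets \<mu> = sets borel" and C: "0 \<le> C"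
    and dbl: "\<And>x r. 0 < r \<Longrightarrow> emeasure \<mu> (ball x (2 * r)) \<le> ennreal C * emeasure \<mu> (ball x r)"
    and t: "0 < t"
  shows "emeasure \<mu> (ball q (2^n * t)) \<le> ennreal (C^n) * emeasure \<mu> (ball q t)"
proof (induction n)
  case 0 then show ?case by simp
next
  case (Suc n)
  have "emeasure \<mu> (ball q (2^Suc n * t)) = emeasure \<mu> (ball q (2 * (2^n * t)))"
    by (simp add: mult.assoc)
  also have "\<dots> \<le> ennreal C * emeasure \<mu> (ball q (2^n * t))" using dbl t by simp
  also have "\<dots> \<le> ennreal C * (ennreal (C^n) * emeasure \<mu> (ball q t))"
    by (rule mult_left_mono[OF Suc]) simp
  also have "\<dots> = ennreal (C^Suc n) * emeasure \<mu> (ball q t)"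
    using C by (simp add: ennreal_mult mult.assoc)
  finally show ?case .
qed

lemma doubling_count:
  fixes \<mu> :: "'a::metric_space measure" and x :: 'a
  assumes sb: "sets \<mu> = sets borel" and C: "1 \<le> C"
    and pos: "\<And>x r. 0 < r \<Longrightarrow> 0 < emeasure \<mu> (ball x r) \<and> emeasure \<mu> (ball x r) < \<infinity>"
    and dbl: "\<And>x r. 0 < r \<Longrightarrow> emeasure \<mu> (ball x (2 * r)) \<le> ennreal C * emeasure \<mu> (ball x r)"
    and S: "finite S" "S \<subseteq> cball x R" and e: "0 < e" "e \<le> R"
    and sep: "\<And>p q. p \<in> S \<Longrightarrow> q \<in> S \<Longrightarrow> p \<noteq> q \<Longrightarrow> e \<le> dist p q"
    and n: "3 * R \<le> 2^n * (e/2)"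
  shows "real (card S) \<le> C^n"
proof -
  have R: "0 < R" using e by linarith
  have meas: "\<And>A. open A \<Longrightarrow> A \<in> sets \<mu>" using sb by auto
  define A where "A = emeasure \<mu> (ball x (2*R))"
  have Ap: "0 < A" "A < \<infinity>" using pos[of "2*R" x] R unfolding A_def by auto
  obtain a where a0: "A = ennreal a" "0 \<le> a" using Ap(2) by (cases A) auto
  have a: "A = ennreal a" "0 < a" using a0 Ap(1) by auto
  have each: "A \<le> ennreal (C^n) * emeasure \<mu> (ball q (e/2))" if q: "q \<in> S" for q
  proof -
    have dq: "dist x q \<le> R" using S q by auto
    have "A \<le> emeasure \<mu> (ball q (3*R))"
      unfolding A_def
    proof (rule emeasure_mono)
      show "ball x (2 * R) \<subseteq> ball q (3 * R)"
      proof
        fix z assume "z \<in> ball x (2*R)"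
        then have "dist x z < 2*R" by simp
        then show "z \<in> ball q (3*R)" using dq dist_triangle[of q z x] by (simp add: dist_commute)
      qed
    qed (simp add: meas)
    also have "\<dots> \<le> emeasure \<mu> (ball q (2^n * (e/2)))"
      by (rule emeasure_mono) (use n in \<open>simp_all add: meas subset_ball\<close>)
    also have "\<dots> \<le> ennreal (C^n) * emeasure \<mu> (ball q (e/2))"
      by (rule doubling_iter[OF sb _ dbl]) (use C e in auto)
    finally show ?thesis .
  qed
  have disj: "disjoint_family_on (\<lambda>q. ball q (e/2)) S"
    unfolding disjoint_family_on_def
  proof (intro ballI impI)
    fix p q assume pq: "p \<in> S" "q \<in> S" "p \<noteq> q"
    show "ball p (e/2) \<inter> ball q (e/2) = {}"
    proof (rule ccontr)
      assume "ball p (e/2) \<inter> ball q (e/2) \<noteq> {}"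
      then obtain z where "dist p z < e/2" "dist q z < e/2" by auto
      then have "dist p q < e" using dist_triangle[of p q z] by (simp add: dist_commute)
      then show False using sep[OF pq] by simp
    qed
  qed
  have U: "(\<Sum>q\<in>S. emeasure \<mu> (ball q (e/2))) = emeasure \<mu> (\<Union>q\<in>S. ball q (e/2))"
    by (rule sum_emeasure[OF _ disj S(1)]) (use meas in auto)
  have U2: "emeasure \<mu> (\<Union>q\<in>S. ball q (e/2)) \<le> A"
    unfolding A_def
  proof (rule emeasure_mono)
    show "(\<Union>q\<in>S. ball q (e/2)) \<subseteq> ball x (2*R)"
    proof
      fix z assume "z \<in> (\<Union>q\<in>S. ball q (e/2))"
      then obtain q where q: "q \<in> S" "dist q z < e/2" by auto
      have "dist x q \<le> R" using S q by auto
      then show "z \<in> ball x (2*R)" using q e dist_triangle[of x z q] by simp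
    qed
  qed (auto intro: meas)
  have "ennreal (real (card S)) * A = (\<Sum>q\<in>S. A)" by (simp add: ennreal_of_nat_eq_real_of_nat)
  also have "\<dots> \<le> (\<Sum>q\<in>S. ennreal (C^n) * emeasure \<mu> (ball q (e/2)))"
    by (rule sum_mono) (rule each)
  also have "\<dots> = ennreal (C^n) * (\<Sum>q\<in>S. emeasure \<mu> (ball q (e/2)))"
    by (simp add: sum_distrib_left)
  also have "\<dots> = ennreal (C^n) * emeasure \<mu> (\<Union>q\<in>S. ball q (e/2))"
    by (simp only: U)
  also have "\<dots> \<le> ennreal (C^n) * A"
    by (rule mult_left_mono[OF U2]) simp
  finally have "ennreal (real (card S)) * A \<le> ennreal (C^n) * A" .
  then have "ennreal (real (card S) * a) \<le> ennreal (C^n * a)"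
    using a C by (simp add: ennreal_mult)
  then have "real (card S) * a \<le> C^n * a"
    using a C by (subst (asm) ennreal_le_iff) auto
  then show ?thesis using a by simp
qed


definition is_chain :: "'a::metric_space set \<Rightarrow> real \<Rightarrow> 'a \<Rightarrow> 'a \<Rightarrow> nat \<Rightarrow> (nat \<Rightarrow> 'a) \<Rightarrow> bool" where
  "is_chain K e y z n f \<longleftrightarrow> f 0 = y \<and> f n = z \<and> (\<forall>j\<le>n. f j \<in> K) \<and> (\<forall>j<n. dist (f j) (f (Suc j)) < e)"

lemma chain_from_path:
  fixes g :: "real \<Rightarrow> 'a::metric_space"
  assumes "path g" "path_image g \<subseteq> K" "0 < e"
  shows "\<exists>n f. is_chain K e (pathstart g) (pathfinish g) n f"
proof -
  have "uniformly_continuous_on {0..1} g"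
    using assms(1) unfolding path_def by (intro compact_uniformly_continuous) auto
  then obtain d where d: "0 < d" "\<And>s t. s \<in> {0..1} \<Longrightarrow> t \<in> {0..1} \<Longrightarrow> dist t s < d \<Longrightarrow> dist (g t) (g s) < e"
    unfolding uniformly_continuous_on_def using assms(3) by metis
  obtain N :: nat where N: "1 / d < real N" using reals_Archimedean2 by blast
  have Npos: "0 < real N" using N d by (smt (verit) divide_pos_pos)
  define f where "f j = g (real j / real N)" for j
  have "is_chain K e (pathstart g) (pathfinish g) N f"
    unfolding is_chain_def
  proof (intro conjI allI impI)
    show "f 0 = pathstart g" by (simp add: f_def pathstart_def)
    show "f N = pathfinish g" using Npos by (simp add: f_def pathfinish_def)
    fix j
    { assume "j \<le> N"
      then have "real j / real N \<in> {0..1}" using Npos by auto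
      then show "f j \<in> K" using assms(2) unfolding f_def path_image_def by auto }
    { assume j: "j < N"
      have a: "real j / real N \<in> {0..1}" "real (Suc j) / real N \<in> {0..1}" using j Npos by auto
      have "dist (real (Suc j) / real N) (real j / real N) = 1 / real N"
        using Npos by (simp add: dist_real_def field_simps)
      also have "\<dots> < d" using N d Npos by (simp add: field_simps)
      finally have "dist (g (real (Suc j) / real N)) (g (real j / real N)) < e"
        using d(2)[OF a(1) a(2)] by blast
      then show "dist (f j) (f (Suc j)) < e" by (simp add: f_def dist_commute) }
  qed
  then show ?thesis by blast
qed

lemma chain_shortcut:
  assumes ch: "is_chain K e y z n f" and ab: "a + 2 \<le> b" "b \<le> n" and d: "dist (f a) (f b) < e"
  shows "is_chain K e y z (n - (b - a - 1)) (\<lambda>j. if j \<le> a then f j else f (j + (b - a - 1)))"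
  using ch ab d unfolding is_chain_def
proof (intro conjI allI impI)
  assume c: "f 0 = y \<and> f n = z \<and> (\<forall>j\<le>n. f j \<in> K) \<and> (\<forall>j<n. dist (f j) (f (Suc j)) < e)"
  show "(if 0 \<le> a then f 0 else f (0 + (b - a - 1))) = y" using c by simp
  show "(if n - (b - a - 1) \<le> a then f (n - (b - a - 1)) else f (n - (b - a - 1) + (b - a - 1))) = z"
    using c ab by auto
  fix j
  show "j \<le> n - (b - a - 1) \<Longrightarrow> (if j \<le> a then f j else f (j + (b - a - 1))) \<in> K"
    using c ab by auto
  assume j: "j < n - (b - a - 1)"
  show "dist (if j \<le> a then f j else f (j + (b - a - 1)))
          (if Suc j \<le> a then f (Suc j) else f (Suc j + (b - a - 1))) < e"
  proof (cases "j < a")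
    case True then show ?thesis using c ab by auto
  next
    case False
    show ?thesis
    proof (cases "j = a")
      case True
      then have "Suc j + (b - a - 1) = b" using ab by auto
      then show ?thesis using True d by auto
    next
      case False': False
      then have "j > a" using False by auto
      then show ?thesis using c ab j by auto
    qed
  qed
qed

lemma chain_minimal:
  assumes "is_chain K e y z n0 f0"
  shows "\<exists>n f. is_chain K e y z n f \<and> (\<forall>a b. a + 2 \<le> b \<and> b \<le> n \<longrightarrow> e \<le> dist (f a) (f b))"
proof -
  define n where "n = (LEAST n. \<exists>f. is_chain K e y z n f)"
  have "\<exists>f. is_chain K e y z n f" unfolding n_def by (rule LeastI) (use assms in blast)
  then obtain f where f: "is_chain K e y z n f" by blast
  have "e \<le> dist (f a) (f b)" if ab: "a + 2 \<le> b" "b \<le> n" for a b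
  proof (rule ccontr)
    assume "\<not> e \<le> dist (f a) (f b)"
    then have "is_chain K e y z (n - (b - a - 1)) (\<lambda>j. if j \<le> a then f j else f (j + (b - a - 1)))"
      by (intro chain_shortcut[OF f ab]) simp
    then have "n \<le> n - (b - a - 1)" unfolding n_def by (blast intro: Least_le)
    then show False using ab by simp
  qed
  then show ?thesis using f by blast
qed


lemma chain_length_bound:
  fixes \<mu> :: "'a::metric_space measure" and x :: 'a
  assumes sb: "sets \<mu> = sets borel" and C: "1 \<le> C"
    and pos: "\<And>x r. 0 < r \<Longrightarrow> 0 < emeasure \<mu> (ball x r) \<and> emeasure \<mu> (ball x r) < \<infinity>"
    and dbl: "\<And>x r. 0 < r \<Longrightarrow> emeasure \<mu> (ball x (2 * r)) \<le> ennreal C * emeasure \<mu> (ball x r)"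
    and ch: "is_chain K e y z n f" and sep: "\<forall>a b. a + 2 \<le> b \<and> b \<le> n \<longrightarrow> e \<le> dist (f a) (f b)"
    and K: "K \<subseteq> cball x R" and e: "0 < e" "e \<le> R" and n0: "3 * R \<le> 2^n0 * (e/2)"
  shows "real n \<le> 2 * C^n0"
proof -
  define S where "S = (\<lambda>i. f (2*i)) ` {..n div 2}"
  have sep2: "e \<le> dist (f (2*i)) (f (2*i'))" if "i \<in> {..n div 2}" "i' \<in> {..n div 2}" "i \<noteq> i'" for i i'
  proof (cases "i < i'")
    case True then show ?thesis using sep that by auto
  next
    case False then have "i' < i" using that by simp
    then show ?thesis using sep that by (auto simp: dist_commute)
  qed
  have inj: "inj_on (\<lambda>i. f (2*i)) {..n div 2}"
    unfolding inj_on_def using sep2 e by fastforce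
  have cardS: "card S = n div 2 + 1" unfolding S_def using card_image[OF inj] by simp
  have "real (card S) \<le> C^n0"
  proof (rule doubling_count[OF sb C pos dbl _ _ e _ n0])
    show "finite S" unfolding S_def by simp
    show "S \<subseteq> cball x R" unfolding S_def using ch K unfolding is_chain_def by auto
    fix p q assume "p \<in> S" "q \<in> S" "p \<noteq> q"
    then show "e \<le> dist p q" unfolding S_def using sep2 by auto
  qed
  then have "real (n div 2 + 1) \<le> C^n0" using cardS by simp
  moreover have "n \<le> 2 * (n div 2 + 1)" by presburger
  then have "real n \<le> 2 * real (n div 2 + 1)" by linarith
  ultimately show ?thesis by linarith
qed

lemma link1:
  fixes c c' :: "'a::metric_space"
  assumes "0 < s" "dist c c' < s/2" "3 \<le> M"
  shows "\<exists>d t. 0 < t \<and> ball d t \<subseteq> ball c s \<inter> ball c' s \<and> ball c s \<union> ball c' s \<subseteq> ball d (M * t)"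
proof (intro exI conjI)
  show "0 < s/2" using assms by simp
  show "ball c (s/2) \<subseteq> ball c s \<inter> ball c' s"
  proof
    fix z assume "z \<in> ball c (s/2)"
    then show "z \<in> ball c s \<inter> ball c' s" using assms dist_triangle[of c' z c] by (auto simp: dist_commute)
  qed
  show "ball c s \<union> ball c' s \<subseteq> ball c (M * (s/2))"
  proof
    fix z assume z: "z \<in> ball c s \<union> ball c' s"
    have 1: "M * (s/2) \<ge> 3 * (s/2)" using assms by (intro mult_right_mono) auto
    have "dist c z < 3 * (s/2)" using z assms dist_triangle[of c z c'] by auto
    then show "z \<in> ball c (M * (s/2))" using 1 by simp
  qed
qed

lemma link2:
  fixes c :: "'a::metric_space"
  assumes "0 < t" "2 \<le> M"
  shows "\<exists>d t'. 0 < t' \<and> ball d t' \<subseteq> ball c (2*t) \<inter> ball c t \<and> ball c (2*t) \<union> ball c t \<subseteq> ball d (M * t')"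
proof (intro exI conjI)
  show "0 < t" by fact
  show "ball c t \<subseteq> ball c (2*t) \<inter> ball c t" using assms by auto
  have 1: "M * t \<ge> 2 * t" using assms by (intro mult_right_mono) auto
  show "ball c (2*t) \<union> ball c t \<subseteq> ball c (M*t)"
  proof
    fix z assume "z \<in> ball c (2*t) \<union> ball c t"
    then have "dist c z < 2*t" using assms by auto
    then show "z \<in> ball c (M*t)" using 1 by simp
  qed
qed


theorem lemma3p3:
  fixes \<mu> :: "'a::metric_space measure" and L :: real
  assumes "doubling_measure \<mu>"
    and "connected (UNIV::'a set)"
    and "1 \<le> L"
    and "annularly_connected L TYPE('a)"
  shows "chain_condition TYPE('a)"
proof -
  have conn: "connected (UNIV::'a set)" by fact
  have L: "1 \<le> L" by fact
  have sb: "sets \<mu> = sets borel"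
    and pos: "\<And>x r. 0 < r \<Longrightarrow> 0 < emeasure \<mu> (ball x r) \<and> emeasure \<mu> (ball x r) < \<infinity>"
    and "\<exists>C::real. \<forall>x r. 0 < r \<longrightarrow> emeasure \<mu> (ball x (2 * r)) \<le> ennreal C * emeasure \<mu> (ball x r)"
    using assms(1) unfolding doubling_measure_def by auto
  then obtain C0 :: real where C0: "\<And>x r. 0 < r \<Longrightarrow> emeasure \<mu> (ball x (2 * r)) \<le> ennreal C0 * emeasure \<mu> (ball x r)"
    by auto
  define C where "C = max C0 1"
  have C: "1 \<le> C" by (simp add: C_def)
  have dbl: "emeasure \<mu> (ball x (2 * r)) \<le> ennreal C * emeasure \<mu> (ball x r)" if "0 < r" for x :: 'a and r
  proof -
    have "ennreal C0 * emeasure \<mu> (ball x r) \<le> ennreal C * emeasure \<mu> (ball x r)"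
      by (intro mult_right_mono ennreal_leI) (auto simp: C_def)
    then show ?thesis using C0[of r x, OF that] by order
  qed
  have ac: "\<And>(x::'a) r y z. 0 < r \<Longrightarrow> y \<in> annulus x r (2 * r) \<Longrightarrow> z \<in> annulus x r (2 * r) \<Longrightarrow>
        (\<exists>g. path g \<and> pathstart g = y \<and> pathfinish g = z \<and>
             path_image g \<subseteq> annulus x (r / L) (2 * r * L))"
    using assms(4) unfolding annularly_connected_def by blast
  show ?thesis unfolding chain_condition_def
  proof (intro allI impI)
    fix lam :: real assume lam: "1 \<le> lam"
    obtain n0 :: nat where n0: "96*lam*L^2 < 2^n0" using real_arch_pow[of 2 "96*lam*L^2"] by auto
    obtain T :: nat where T: "6*L^2 < 2^T" using real_arch_pow[of 2 "6*L^2"] by auto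
    define N where "N = nat \<lceil>2 * C^n0\<rceil> + 1"
    define M where "M = real T * real N + 16*lam*L^2 + 4*L + 3"
    define m where "m = 1 / real N"
    have Npos: "0 < N" by (simp add: N_def)
    have LL: "1 \<le> L^2" using L by (simp add: one_le_power)
    have lamLL: "0 \<le> 16*lam*L^2" using lam by simp
    have TN: "0 \<le> real T * real N" by simp
    have M3: "3 \<le> M" and M1: "1 \<le> M" and M4: "4*L \<le> M" and M16: "16*lam*L^2 \<le> M"
      and MT: "real T * real N \<le> M"
      using lamLL TN L unfolding M_def by linarith+
    show "\<exists>M m. 1 \<le> M \<and> 0 < m \<and> m \<le> 1 \<and>
         (\<forall>(x::'a) r. admissible_radius TYPE('a) r \<longrightarrow>
           (\<exists>(c::nat \<Rightarrow> 'a) (s::nat \<Rightarrow> real).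
              (\<forall>i. 0 < s i) \<and>
              ball (c 0) (s 0) \<subseteq> UNIV - ball x r \<and>
              (\<forall>i. diameter (ball (c i) (s i)) / M \<le> infdist x (ball (c i) (s i)) \<and>
                   infdist x (ball (c i) (s i)) \<le> M * diameter (ball (c i) (s i))) \<and>
              (\<forall>i. infdist x (ball (c i) (s i)) \<le> M * r * 2 powr (- m * real i)) \<and>
              (\<forall>i. \<exists>d t. 0 < t \<and>
                   ball d t \<subseteq> ball (c i) (s i) \<inter> ball (c (Suc i)) (s (Suc i)) \<and>
                   ball (c i) (s i) \<union> ball (c (Suc i)) (s (Suc i)) \<subseteq> ball d (M * t)) \<and>
              (\<forall>p. finite {i. p \<in> ball (c i) (lam * s i)} \<and>
                   real (card {i. p \<in> ball (c i) (lam * s i)}) \<le> M)))"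
    proof (rule exI[of _ M], rule exI[of _ m], intro conjI allI impI)
      show "1 \<le> M" by fact
      show "0 < m" using Npos by (simp add: m_def)
      show "m \<le> 1" using Npos by (simp add: m_def)
      fix x :: 'a and r :: real assume adm: "admissible_radius TYPE('a) r"
      then have r: "0 < r" by (simp add: admissible_radius_def)
      have "\<exists>w. 2*r \<le> dist x w"
      proof (cases "bounded (UNIV::'a set)")
        case True
        then have "8*r < diameter (UNIV::'a set)" using adm by (simp add: admissible_radius_def)
        then obtain a b :: 'a where "8*r < dist a b" using diameter_lower_bounded[OF True, of "8*r"] r by auto
        then have "4*r < dist x a \<or> 4*r < dist x b" using dist_triangle[of a b x] by (auto simp: dist_commute)
        then show ?thesis
        proof
          assume "4*r < dist x a" then show ?thesis using r by (intro exI[of _ a]) simp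
        next
          assume "4*r < dist x b" then show ?thesis using r by (intro exI[of _ b]) simp
        qed
      next
        case False
        then have "\<exists>y. \<not> dist x y \<le> 2*r" unfolding bounded_def by blast
        then show ?thesis by (auto simp: not_le intro: less_imp_le)
      qed
      then obtain w where w: "2*r \<le> dist x w" by blast
      define \<rho> where "\<rho> k = r / 2^k" for k :: nat
      have \<rho>pos: "0 < \<rho> k" for k using r by (simp add: \<rho>_def)
      have \<rho>Suc: "2 * \<rho> (Suc k) = \<rho> k" for k by (simp add: \<rho>_def)
      have \<rho>0: "\<rho> 0 = r" by (simp add: \<rho>_def)
      have \<rho>le: "\<rho> k \<le> r" for k using r by (simp add: \<rho>_def field_simps)
      have "\<forall>k. \<exists>z. dist x z = 2 * \<rho> k"
      proof
        fix k show "\<exists>z. dist x z = 2 * \<rho> k"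
          by (rule ivt_dist[OF conn, of _ x w]) (use \<rho>pos[of k] \<rho>le[of k] w in auto)
      qed
      then have "\<exists>y. \<forall>k. dist x (y k) = 2 * \<rho> k" by (rule choice)
      then obtain y where y: "\<And>k. dist x (y k) = 2 * \<rho> k" by blast
      define A where "A k = annulus x (\<rho> k / L) (2 * \<rho> k * L)" for k
      define \<epsilon> where "\<epsilon> k = \<rho> k / (8*lam*L)" for k
      have \<epsilon>pos: "0 < \<epsilon> k" for k using \<rho>pos[of k] lam L by (simp add: \<epsilon>_def)
      have "\<forall>k. \<exists>n f. is_chain (A k) (\<epsilon> k) (y k) (y (Suc k)) n f \<and>
               (\<forall>a b. a + 2 \<le> b \<and> b \<le> n \<longrightarrow> \<epsilon> k \<le> dist (f a) (f b))"
      proof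
        fix k
        have "y k \<in> annulus x (\<rho> k) (2 * \<rho> k)" using y[of k] \<rho>pos[of k] by (simp add: annulus_def)
        moreover have "y (Suc k) \<in> annulus x (\<rho> k) (2 * \<rho> k)"
          using y[of "Suc k"] \<rho>pos[of k] \<rho>Suc[of k] by (simp add: annulus_def)
        ultimately obtain g where g: "path g" "pathstart g = y k" "pathfinish g = y (Suc k)"
          "path_image g \<subseteq> A k"
          using ac[OF \<rho>pos[of k]] unfolding A_def by blast
        obtain n f where "is_chain (A k) (\<epsilon> k) (y k) (y (Suc k)) n f"
          using chain_from_path[OF g(1) g(4) \<epsilon>pos[of k]] g(2,3) by auto
        then show "\<exists>n f. is_chain (A k) (\<epsilon> k) (y k) (y (Suc k)) n f \<and>
               (\<forall>a b. a + 2 \<le> b \<and> b \<le> n \<longrightarrow> \<epsilon> k \<le> dist (f a) (f b))"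
          by (rule chain_minimal)
      qed
      then have "\<exists>nn. \<forall>k. \<exists>f. is_chain (A k) (\<epsilon> k) (y k) (y (Suc k)) (nn k) f \<and>
               (\<forall>a b. a + 2 \<le> b \<and> b \<le> nn k \<longrightarrow> \<epsilon> k \<le> dist (f a) (f b))" by (rule choice)
      then obtain nn where "\<forall>k. \<exists>f. is_chain (A k) (\<epsilon> k) (y k) (y (Suc k)) (nn k) f \<and>
               (\<forall>a b. a + 2 \<le> b \<and> b \<le> nn k \<longrightarrow> \<epsilon> k \<le> dist (f a) (f b))" by blast
      then have "\<exists>ff. \<forall>k. is_chain (A k) (\<epsilon> k) (y k) (y (Suc k)) (nn k) (ff k) \<and>
               (\<forall>a b. a + 2 \<le> b \<and> b \<le> nn k \<longrightarrow> \<epsilon> k \<le> dist (ff k a) (ff k b))" by (rule choice)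
      then obtain ff where ch: "\<And>k. is_chain (A k) (\<epsilon> k) (y k) (y (Suc k)) (nn k) (ff k)"
        and sp: "\<And>k. \<forall>a b. a + 2 \<le> b \<and> b \<le> nn k \<longrightarrow> \<epsilon> k \<le> dist (ff k a) (ff k b)"
        by blast
      have lamL1: "1 \<le> lam * L" using mult_mono[of 1 lam 1 L] lam L by simp
      have \<epsilon>le: "\<epsilon> k \<le> 2 * \<rho> k * L" for k
      proof -
        have "\<rho> k / (8*lam*L) \<le> \<rho> k" using \<rho>pos[of k] lamL1
          by (simp add: divide_le_eq mult.assoc)
        also have "\<rho> k \<le> 2 * \<rho> k * L" using \<rho>pos[of k] L
          by (smt (verit) mult_le_cancel_left1 mult.commute mult.assoc)
        finally show ?thesis by (simp add: \<epsilon>_def)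
      qed
      have nnN: "nn k \<le> N - 1" for k
      proof -
        have "real (nn k) \<le> 2 * C^n0"
        proof (rule chain_length_bound[OF sb C pos dbl ch sp])
          show "A k \<subseteq> cball x (2 * \<rho> k * L)" by (auto simp: A_def annulus_def)
          show "0 < \<epsilon> k" by (rule \<epsilon>pos)
          show "\<epsilon> k \<le> 2 * \<rho> k * L" by (rule \<epsilon>le)
          have h: "96*lam*L^2*\<rho> k \<le> 2^n0*\<rho> k"
            using n0 \<rho>pos[of k] by (intro mult_right_mono) auto
          show "3 * (2 * \<rho> k * L) \<le> 2^n0 * (\<epsilon> k / 2)"
            using h \<rho>pos[of k] lam L unfolding \<epsilon>_def by (simp add: field_simps power2_eq_square)
        qed
        then have "real (nn k) \<le> real_of_int \<lceil>2 * C^n0\<rceil>" using le_of_int_ceiling order_trans by blast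
        then have "int (nn k) \<le> \<lceil>2 * C^n0\<rceil>" by linarith
        then show ?thesis by (simp add: N_def)
      qed
      define c where "c i = ff (i div N) (min (i mod N) (nn (i div N)))" for i
      define s where "s i = \<rho> (i div N) / (4*lam*L)" for i
      have spos: "0 < s i" for i using \<rho>pos lam L by (simp add: s_def)
      have chk: "ff k 0 = y k" "ff k (nn k) = y (Suc k)" "\<And>j. j \<le> nn k \<Longrightarrow> ff k j \<in> A k"
        "\<And>j. j < nn k \<Longrightarrow> dist (ff k j) (ff k (Suc j)) < \<epsilon> k" for k
        using ch[of k] unfolding is_chain_def by auto
      have cA: "c i \<in> A (i div N)" for i unfolding c_def by (rule chk(3)) simp
      have cd1: "\<rho> (i div N) / L \<le> dist x (c i)" and cd2: "dist x (c i) \<le> 2 * \<rho> (i div N) * L" for i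
        using cA[of i] by (auto simp: A_def annulus_def not_less)
      have s_eq: "s i = (\<rho> (i div N) / L) / (4*lam)" for i by (simp add: s_def field_simps)
      have s_le: "s i \<le> (\<rho> (i div N) / L) / 4" for i
        unfolding s_eq using \<rho>pos[of "i div N"] L lam
        by (intro divide_left_mono) auto
      have s_eps: "s i = 2 * \<epsilon> (i div N)" for i by (simp add: s_def \<epsilon>_def field_simps)
      have c0: "c 0 = y 0" using chk(1)[of 0] by (simp add: c_def)
      have P1: "ball (c 0) (s 0) \<subseteq> UNIV - ball x r"
      proof
        fix z assume "z \<in> ball (c 0) (s 0)"
        then have "dist (y 0) z < s 0" using c0 by simp
        moreover have "s 0 \<le> r / 4"
        proof -
          have "s 0 = r / (4*(lam*L))" by (simp add: s_def \<rho>0 mult.assoc)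
          also have "\<dots> \<le> r / 4" using lamL1 r by (intro divide_left_mono) auto
          finally show ?thesis .
        qed
        moreover have "dist x (y 0) = 2 * r" using y[of 0] \<rho>0 by simp
        ultimately show "z \<in> UNIV - ball x r" using dist_triangle[of x "y 0" z] dist_commute[of z "y 0"] r by simp
      qed
      have P2: "diameter (ball (c i) (s i)) / M \<le> infdist x (ball (c i) (s i)) \<and>
                   infdist x (ball (c i) (s i)) \<le> M * diameter (ball (c i) (s i))" for i
      proof
        define u where "u = \<rho> (i div N) / L"
        have u: "0 < u" using \<rho>pos L by (simp add: u_def)
        have d1: "diameter (ball (c i) (s i)) \<le> 2 * s i" by (rule diameter_ball_le[OF spos])
        have sle: "s i \<le> u / 4" using s_le u_def by simp
        have d2: "s i / 2 \<le> diameter (ball (c i) (s i))"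
          by (rule diameter_ball_ge[OF conn spos[of i], where x=x]) (use cd1[of i] sle u in \<open>simp add: u_def dist_commute\<close>)
        have cdu: "u \<le> dist x (c i)" using cd1[of i] by (simp add: u_def)
        have i1: "dist x (c i) - s i \<le> infdist x (ball (c i) (s i))" by (rule infdist_ball_ge[OF spos])
        have i2: "infdist x (ball (c i) (s i)) \<le> dist x (c i)" by (rule infdist_le) (simp add: spos)
        have dpos: "0 \<le> diameter (ball (c i) (s i))" using d2 spos[of i] by linarith
        have "diameter (ball (c i) (s i)) / M \<le> diameter (ball (c i) (s i))"
          using divide_left_mono[of 1 M "diameter (ball (c i) (s i))"] dpos M1 by simp
        then show "diameter (ball (c i) (s i)) / M \<le> infdist x (ball (c i) (s i))"
          using d1 i1 sle cdu u by linarith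
        have "2 * \<rho> (i div N) * L = 16*lam*L^2 * (s i / 2)"
          using lam L by (simp add: s_def power2_eq_square field_simps)
        also have "\<dots> \<le> M * (s i / 2)"
          using M16 spos[of i] by (intro mult_right_mono) auto
        also have "M * (s i / 2) \<le> M * diameter (ball (c i) (s i))"
          using M1 d2 by (intro mult_left_mono) auto
        finally show "infdist x (ball (c i) (s i)) \<le> M * diameter (ball (c i) (s i))"
          using i2 cd2[of i] by linarith
      qed
      have P3: "infdist x (ball (c i) (s i)) \<le> M * r * 2 powr (- m * real i)" for i
      proof -
        define k where "k = i div N"
        have "i = k*N + i mod N" by (simp add: k_def)
        moreover have "i mod N < N" using Npos by simp
        ultimately have "i < (k + 1) * N" by (simp add: algebra_simps)
        then have "real i < (real k + 1) * real N" by (metis of_nat_1 of_nat_add of_nat_less_iff of_nat_mult)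
        then have "m * real i \<le> real k + 1" using Npos by (simp add: m_def field_simps)
        then have A1: "2 powr (- (real k + 1)) \<le> 2 powr (- m * real i)" by (intro powr_mono) auto
        have A2: "2 powr (- (real k + 1)) = 1 / 2^(Suc k)"
        proof -
          have "real k + 1 = real (Suc k)" by simp
          then have "2 powr (- (real k + 1)) = inverse (2 powr real (Suc k))" by (simp only: powr_minus)
          also have "2 powr real (Suc k) = (2::real)^(Suc k)" by (rule powr_realpow) simp
          finally show ?thesis by (simp only: inverse_eq_divide)
        qed
        have pw: "1 / 2^(Suc k) \<le> 2 powr (- m * real i)" using A1 unfolding A2 .
        have "infdist x (ball (c i) (s i)) \<le> dist x (c i)" by (rule infdist_le) (simp add: spos)
        also have "\<dots> \<le> 2 * \<rho> k * L" using cd2[of i] k_def by simp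
        also have "\<dots> = 4 * L * r * (1 / 2^(Suc k))" by (simp add: \<rho>_def)
        also have "\<dots> \<le> M * r * (1 / 2^(Suc k))" using M4 r by (intro mult_right_mono) auto
        also have "\<dots> \<le> M * r * 2 powr (- m * real i)" using pw M1 r by (intro mult_left_mono) auto
        finally show ?thesis .
      qed
      have P4: "\<exists>d t. 0 < t \<and>
                   ball d t \<subseteq> ball (c i) (s i) \<inter> ball (c (Suc i)) (s (Suc i)) \<and>
                   ball (c i) (s i) \<union> ball (c (Suc i)) (s (Suc i)) \<subseteq> ball d (M * t)" for i
      proof (cases "Suc (i mod N) = N")
        case False
        define k where "k = i div N"
        define j where "j = i mod N"
        have e1: "Suc i div N = k" "Suc i mod N = Suc j" using False Npos
          by (auto simp: k_def j_def div_Suc mod_Suc)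
        have cSuc: "c (Suc i) = ff k (min (Suc j) (nn k))" using e1 by (simp add: c_def)
        have ci: "c i = ff k (min j (nn k))" by (simp add: c_def k_def j_def)
        have sS: "s (Suc i) = s i" using e1 by (simp add: s_def k_def)
        have "dist (c i) (c (Suc i)) < s i / 2"
        proof (cases "j < nn k")
          case True then show ?thesis using chk(4)[OF True] ci cSuc s_eps[of i] k_def by simp
        next
          case False then show ?thesis using ci cSuc spos[of i] by simp
        qed
        then show ?thesis using link1[OF spos[of i], where c="c i" and c'="c (Suc i)" and M=M] M3 sS by simp
      next
        case True
        define k where "k = i div N"
        have e1: "Suc i div N = Suc k" "Suc i mod N = 0" using True Npos
          by (auto simp: k_def div_Suc mod_Suc)
        have cSuc: "c (Suc i) = y (Suc k)" using e1 chk(1) by (simp add: c_def)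
        have "i mod N = N - 1" using True by simp
        then have ci: "c i = y (Suc k)" using nnN[of k] chk(2)[of k] by (simp add: c_def k_def min_absorb2)
        have sS: "s i = 2 * s (Suc i)" using e1 \<rho>Suc[of k] by (simp add: s_def k_def field_simps)
        show ?thesis using link2[OF spos[of "Suc i"], where M=M and c="y (Suc k)"] M3 ci cSuc sS by simp
      qed
      have P5: "finite {i. p \<in> ball (c i) (lam * s i)} \<and>
                   real (card {i. p \<in> ball (c i) (lam * s i)}) \<le> M" for p
      proof -
        define Ip where "Ip = {i. p \<in> ball (c i) (lam * s i)}"
        define D where "D = dist x p"
        have Lpos: "0 < L" using L by simp
        have kk: "3 * \<rho> (i div N) < 4 * L * D \<and> D < 3 * \<rho> (i div N) * L" if "i \<in> Ip" for i
        proof -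
          define \<rho>k where "\<rho>k = \<rho> (i div N)"
          define u where "u = \<rho>k / L"
          have pos: "0 < \<rho>k" using \<rho>pos by (simp add: \<rho>k_def)
          have ls: "lam * s i = u / 4" using lam L by (simp add: s_def \<rho>k_def u_def field_simps)
          have dcp: "dist (c i) p < u / 4" using that ls by (simp add: Ip_def)
          have a1: "u \<le> dist x (c i)" "dist x (c i) \<le> 2*\<rho>k*L" using cd1[of i] cd2[of i] by (simp_all add: \<rho>k_def u_def)
          have t1: "dist x (c i) \<le> D + dist (c i) p" using dist_triangle[of x "c i" p] dist_commute[of p "c i"] by (simp add: D_def)
          have t2: "D \<le> dist x (c i) + dist (c i) p" by (simp add: D_def dist_triangle)
          have \<rho>u: "\<rho>k = L * u" using Lpos by (simp add: u_def)
          have uL: "u \<le> \<rho>k * L"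
          proof -
            have "u \<le> \<rho>k" unfolding u_def using pos L by (simp add: divide_le_eq)
            also have "\<rho>k \<le> \<rho>k * L" using pos L by simp
            finally show ?thesis .
          qed
          have "3 * u < 4 * D" using t1 dcp a1 by linarith
          then have "L * (3 * u) < L * (4 * D)" using Lpos by (intro mult_strict_left_mono)
          then have g1: "3 * \<rho>k < 4 * L * D" using \<rho>u by (simp add: algebra_simps)
          have a2: "dist x (c i) \<le> 2*(\<rho>k*L)" using a1(2) by (simp add: mult.assoc)
          have "D < 3 * (\<rho>k * L)" using t2 dcp a2 uL mult_pos_pos[OF pos Lpos] by linarith
          then have g2: "D < 3 * \<rho>k * L" by (simp add: mult.assoc)
          show ?thesis using g1 g2 by (simp add: \<rho>k_def)
        qed
        have pair: "i2 div N < i1 div N + T" if i12: "i1 \<in> Ip" "i2 \<in> Ip" "i1 div N \<le> i2 div N" for i1 i2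
        proof -
          define k1 where "k1 = i1 div N"
          define d where "d = i2 div N - k1"
          have k2: "i2 div N = k1 + d" using i12(3) by (simp add: d_def k1_def)
          define \<rho>2 where "\<rho>2 = \<rho> (k1 + d)"
          have p2: "0 < \<rho>2" using \<rho>pos by (simp add: \<rho>2_def)
          have id: "\<rho> k1 = 2^d * \<rho>2" by (simp add: \<rho>2_def \<rho>_def power_add field_simps)
          have h1: "3 * (2^d * \<rho>2) < 4 * L * D" using kk[OF i12(1)] id by (simp add: k1_def)
          have h2: "D < 3 * \<rho>2 * L" using kk[OF i12(2)] k2 by (simp add: \<rho>2_def)
          have "4 * L * D < 4 * L * (3 * \<rho>2 * L)" using h2 Lpos by (intro mult_strict_left_mono) auto
          then have "3 * (2^d * \<rho>2) < 12 * (L^2 * \<rho>2)" using h1 by (simp add: power2_eq_square algebra_simps)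
          then have "(2^d) * \<rho>2 < (4 * L^2) * \<rho>2" by (simp add: algebra_simps)
          then have "(2::real)^d < 4 * L^2" using p2 by (simp add: mult_less_cancel_right_pos)
          also have "\<dots> \<le> 6 * L^2" by simp
          also have "\<dots> < 2^T" by (rule T)
          finally have "d < T" by (rule power_less_imp_less_exp[rotated]) simp
          then show ?thesis using k2 by (simp add: k1_def)
        qed
        have "finite Ip \<and> real (card Ip) \<le> M"
        proof (cases "Ip = {}")
          case True then show ?thesis using M1 by simp
        next
          case False
          define k1 where "k1 = (LEAST k. \<exists>i\<in>Ip. i div N = k)"
          have "\<exists>i\<in>Ip. i div N = k1" unfolding k1_def by (rule LeastI_ex) (use False in auto)
          then obtain i1 where i1: "i1 \<in> Ip" "i1 div N = k1" by blast
          have sub: "Ip \<subseteq> {k1*N ..< (k1+T)*N}"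
          proof
            fix i assume i: "i \<in> Ip"
            have le: "k1 \<le> i div N" unfolding k1_def by (rule Least_le) (use i in auto)
            have lt: "i div N < k1 + T" using pair[OF i1(1) i] le i1(2) by simp
            have e: "i = (i div N)*N + i mod N" by (metis div_mult_mod_eq)
            have f: "i mod N < N" using Npos by simp
            have g: "k1 * N \<le> (i div N)*N" using le by simp
            have h: "(i div N + 1) * N \<le> (k1+T)*N" using lt by (intro mult_right_mono) auto
            have h': "(i div N)*N + N \<le> (k1+T)*N" using h by (simp add: algebra_simps)
            show "i \<in> {k1*N ..< (k1+T)*N}" unfolding atLeastLessThan_iff using e f g h' by linarith
          qed
          have fin: "finite Ip" using sub finite_subset by blast
          have "card Ip \<le> card {k1*N ..< (k1+T)*N}" by (rule card_mono[OF _ sub]) simp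
          also have "\<dots> = T * N" by (simp add: algebra_simps)
          finally have "real (card Ip) \<le> real T * real N" by (metis of_nat_le_iff of_nat_mult)
          with MT fin show ?thesis by linarith
        qed
        then show ?thesis by (simp add: Ip_def)
      qed
      show "\<exists>(c::nat \<Rightarrow> 'a) (s::nat \<Rightarrow> real).
              (\<forall>i. 0 < s i) \<and>
              ball (c 0) (s 0) \<subseteq> UNIV - ball x r \<and>
              (\<forall>i. diameter (ball (c i) (s i)) / M \<le> infdist x (ball (c i) (s i)) \<and>
                   infdist x (ball (c i) (s i)) \<le> M * diameter (ball (c i) (s i))) \<and>
              (\<forall>i. infdist x (ball (c i) (s i)) \<le> M * r * 2 powr (- m * real i)) \<and>
              (\<forall>i. \<exists>d t. 0 < t \<and>
                   ball d t \<subseteq> ball (c i) (s i) \<inter> ball (c (Suc i)) (s (Suc i)) \<and>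
                   ball (c i) (s i) \<union> ball (c (Suc i)) (s (Suc i)) \<subseteq> ball d (M * t)) \<and>
              (\<forall>p. finite {i. p \<in> ball (c i) (lam * s i)} \<and>
                   real (card {i. p \<in> ball (c i) (lam * s i)}) \<le> M)"
        apply (rule exI[of _ c], rule exI[of _ s])
        by (intro conjI allI spos P1 P2[THEN conjunct1] P2[THEN conjunct2] P3 P4 P5[THEN conjunct1] P5[THEN conjunct2])
    qed
  qed
qed

end
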